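(* Consider the algorithm described in the context applied to the problem described there. (i) If the algorithm terminates at iteration $k$ because $J_k^Tc_k=0$ and $c_k\neq 0$, then $x_k$ is an infeasible stationary point, i.e., $c_k\neq0$ and $J_k^Tc_k=0$. (ii) If the algorithm terminates at iteration $k$ because $s_k=0$, then $x_k$ is a first-order KKT point of the problem, i.e., $c(x_k)=0$ and there exist $y\in\mathbb{R}^m$ and $g_r\in\partial r(x_k)$ with $\nabla f(x_k)+g_r-J(x_k)^Ty=0$.
   Context: Problem: $\min_{x\in\mathbb{R}^n} f(x)+r(x)$ subject to $c(x)=0$, where $f:\mathbb{R}^n\to\mathbb{R}$ and $c:\mathbb{R}^n\to\mathbb{R}^m$ ($m\le n$) are continuously differentiable and $r:\mathbb{R}^n\to\mathbb{R}_{\ge 0}$ is convex. Write $g(x)=\nabla f(x)$, $J(x)=\nabla c(x)^T$, and $f_k=f(x_k)$, $g_k=g(x_k)$, $c_k=c(x_k)$, $J_k=J(x_k)$, $r_k=r(x_k)$. All norms are Euclidean. Algorithm: inputs $x_0$, $\alpha_0>0$, $\tau_{-1}>0$; constants $\kappa_v>0$, $\sigma_c,\epsilon_\tau,\xi,\eta\in(0,1)$, $\sigma_u\in(0,1/2]$, $\bar\sigma_u:=\sigma_u+\tfrac12$. For $k=0,1,\dots$: 1. If $J_k^Tc_k\ne0$, compute $v_k$ with $v_k\in\mathrm{Range}(J_k^T)$, $\|v_k\|_2\le\kappa_v\alpha_k\|J_k^Tc_k\|_2$, $\|c_k+J_kv_k\|_2\le\|c_k+J_kv_k^c\|_2$,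 where $v_k^c=-\beta_k^cJ_k^Tc_k$ with $\beta_k^c$ minimizing $\tfrac12\|c_k-\beta J_kJ_k^Tc_k\|_2^2$ over $0\le\beta\le\kappa_v\alpha_k$. Otherwise set $v_k=0$, and if $c_k\ne0$ terminate returning $x_k$. 2. Let $u_k$ be the unique minimizer of $g_k^Tu+\tfrac1{2\alpha_k}\|u\|_2^2+r(x_k+v_k+u)$ subject to $J_ku=0$; set $s_k=v_k+u_k$. If $s_k=0$, terminate returning $x_k$. 3. Let $D_k:=g_k^Ts_k+\bar\sigma_u\|s_k\|_2^2/\alpha_k+r(x_k+s_k)-r_k$; $\tau_{k,\mathrm{trial}}=\infty$ if $D_k\le0$, else $\tau_{k,\mathrm{trial}}=(1-\sigma_c)(\|c_k\|_2-\|c_k+J_kv_k\|_2)/D_k$. Set $\tau_k=\tau_{k-1}$ if $\tau_{k-1}\le\tau_{k,\mathrm{trial}}$, else $\tau_k=\min\{(1-\epsilon_\tau)\tau_{k-1},\tau_{k,\mathrm{trial}}\}$. 4. With $\Delta q_k(s,\tau):=-\tau(g_k^Ts+\tfrac1{2\alpha_k}\|s\|_2^2+r(x_k+s)-r_k)+\|c_k\|_2-\|c_k+J_ks\|_2$ and merit function $\Phi_\tau(x)=\tau(f(x)+r(x))+\|c(x)\|_2$: if $\Phi_{\tau_k}(x_k+s_k)\le\Phi_{\tau_k}(x_k)-\eta\Delta q_k(s_k,\tau_k)$ set $x_{k+1}=x_k+s_k$, $\alpha_{k+1}=\alpha_k$; else $x_{k+1}=x_k$, $\alpha_{k+1}=\xi\alpha_k$.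 Standing assumption: there is an open convex set $\mathcal X$ containing all iterates and trial points on which $f$ is bounded below, $\nabla f$ is bounded and Lipschitz, $c$ and $J$ are bounded, $J$ is Lipschitz, and the subdifferential of $r$ is bounded. *)

theory Defs
  imports "HOL-Analysis.Analysis"
begin

definition subdiff :: "(real^'n \<Rightarrow> real) \<Rightarrow> real^'n \<Rightarrow> (real^'n) set" where
  "subdiff r x = {d. \<forall>y. r y \<ge> r x + d \<bullet> (y - x)}"

text \<open>Step 1 of the algorithm at an iterate (x_k, alpha_k): conditions on the
  normal step v_k, given the constraint value ck = c(x_k) and Jacobian Jk = J(x_k).\<close>
definition normal_step_ok ::
  "real \<Rightarrow> real \<Rightarrow> real^'m \<Rightarrow> real^'n^'m \<Rightarrow> real^'n \<Rightarrow> bool" where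
  "normal_step_ok kappa_v alpha ck Jk v \<longleftrightarrow>
     (if transpose Jk *v ck \<noteq> 0 then
        v \<in> range (\<lambda>w. transpose Jk *v w) \<and>
        norm v \<le> kappa_v * alpha * norm (transpose Jk *v ck) \<and>
        (\<exists>beta_c. 0 \<le> beta_c \<and> beta_c \<le> kappa_v * alpha \<and>
           (\<forall>beta. 0 \<le> beta \<and> beta \<le> kappa_v * alpha \<longrightarrow>
              (1/2) * (norm (ck - beta *\<^sub>R (Jk *v (transpose Jk *v ck))))\<^sup>2
              \<ge> (1/2) * (norm (ck - beta_c *\<^sub>R (Jk *v (transpose Jk *v ck))))\<^sup>2) \<and>
           norm (ck + Jk *v v) \<le> norm (ck + Jk *v (- (beta_c *\<^sub>R (transpose Jk *v ck)))))
      else v = 0)"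

definition tangential_step_ok ::
  "(real^'n \<Rightarrow> real) \<Rightarrow> real \<Rightarrow> real^'n \<Rightarrow> real^'n \<Rightarrow> real^'n^'m \<Rightarrow> real^'n \<Rightarrow> real^'n \<Rightarrow> bool" where
  "tangential_step_ok r alpha x gk Jk v u \<longleftrightarrow>
     Jk *v u = 0 \<and>
     (\<forall>w. Jk *v w = 0 \<longrightarrow>
        gk \<bullet> u + (norm u)\<^sup>2 / (2 * alpha) + r (x + v + u)
        \<le> gk \<bullet> w + (norm w)\<^sup>2 / (2 * alpha) + r (x + v + w))"

end

theory Submission
  imports Defs
begin



lemma tdot: "(transpose (A::real^'n^'m) *v w) \<bullet> v = w \<bullet> (A *v v)"
  by (simp add: dot_lmul_matrix)

lemma range_T:
  fixes J :: "real^'n^'m" and q :: "real^'n"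
  assumes "\<And>w. J *v w = 0 \<Longrightarrow> q \<bullet> w = 0"
  shows "\<exists>y. q = transpose J *v y"
proof -
  let ?S = "range (\<lambda>w. transpose J *v w)"
  obtain s t where s: "s \<in> span ?S" and t: "\<And>w. w \<in> span ?S \<Longrightarrow> orthogonal t w" and q: "q = s + t"
    using orthogonal_subspace_decomp_exists[of ?S q] by blast
  have sub: "subspace ?S"
    using linear_subspace_image[OF matrix_vector_mul_linear subspace_UNIV] by blast 
  have "s \<in> ?S" using s sub by (metis span_eq_iff)
  then obtain y where y: "s = transpose J *v y" by blast
  have "\<And>w. t \<bullet> (transpose J *v w) = 0"
    using t by (simp add: span_base orthogonal_def)
  hence "\<And>w. (J *v t) \<bullet> w = 0" by (metis tdot inner_commute)
  hence "J *v t = 0" by (metis inner_eq_zero_iff)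
  hence "q \<bullet> t = 0" using assms by blast
  moreover have "s \<bullet> t = 0" using t s by (simp add: orthogonal_def inner_commute)
  ultimately have "t \<bullet> t = 0" using q by (simp add: inner_add_left)
  hence "t = 0" by simp
  thus ?thesis using q y by auto
qed



lemma sep_kkt:
  fixes phi :: "real^'n \<Rightarrow> real" and J :: "real^'n^'m"
  assumes cvx: "convex_on UNIV phi" and p0: "phi 0 = 0"
    and nn: "\<And>w. J *v w = 0 \<Longrightarrow> phi w \<ge> 0"
  shows "\<exists>q. (\<forall>w. J *v w = 0 \<longrightarrow> q \<bullet> w = 0) \<and> (\<forall>w. phi w \<ge> q \<bullet> w)"
proof -
  define A where "A = {z::(real^'n) \<times> real. snd z > phi (fst z)}"
  define B where "B = {z::(real^'n) \<times> real. J *v fst z = 0 \<and> snd z = 0}"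
  have cA: "convex A"
    unfolding convex_def A_def
  proof (clarsimp)
    fix w1 t1 w2 t2 and u v :: real
    assume h: "phi w1 < t1" "phi w2 < t2" "0 \<le> u" "0 \<le> v" "u + v = 1"
    have "phi (u *\<^sub>R w1 + v *\<^sub>R w2) \<le> u * phi w1 + v * phi w2"
      using cvx h by (simp add: convex_on_def)
    also have "\<dots> < u * t1 + v * t2"
    proof (cases "u = 0")
      case True then show ?thesis using h by simp
    next
      case False
      then have "u * phi w1 < u * t1" using h by simp
      moreover have "v * phi w2 \<le> v * t2" using h by (simp add: mult_left_mono)
      ultimately show ?thesis by linarith
    qed
    finally show "phi (u *\<^sub>R w1 + v *\<^sub>R w2) < u * t1 + v * t2" .
  qed
  have cB: "convex B"
    unfolding convex_def B_def by (auto simp: matrix_vector_mult_scaleR matrix_vector_right_distrib)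
  have neA: "A \<noteq> {}" unfolding A_def using p0 by (auto intro!: exI[of _ "0::real^'n"] exI[of _ "1::real"])
  have neB: "B \<noteq> {}" unfolding B_def by (auto intro!: exI[of _ "0::real^'n"])
  have dis: "A \<inter> B = {}" unfolding A_def B_def using nn by force
  obtain a b where a0: "a \<noteq> 0" and hA: "\<forall>x\<in>A. a \<bullet> x \<le> b" and hB: "\<forall>x\<in>B. a \<bullet> x \<ge> b"
    using separating_hyperplane_sets[OF cA cB neA neB dis] by blast
  obtain p \<sigma> where a: "a = (p, \<sigma>)" by fastforce
  have A': "p \<bullet> w + \<sigma> * t \<le> b" if "t > phi w" for w t
    using hA that a by (auto simp: A_def inner_Pair)
  have B': "p \<bullet> w \<ge> b" if "J *v w = 0" for w
    using hB that a by (auto simp: B_def inner_Pair)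
  have b0: "b \<le> 0" using B'[of 0] by simp
  have pN: "p \<bullet> w = 0" if "J *v w = 0" for w
  proof (rule ccontr)
    assume ne: "p \<bullet> w \<noteq> 0"
    define l where "l = (b - 1) / (p \<bullet> w)"
    have "J *v (l *\<^sub>R w) = 0" using that by (simp add: matrix_vector_mult_scaleR)
    hence "p \<bullet> (l *\<^sub>R w) \<ge> b" by (rule B')
    moreover have "p \<bullet> (l *\<^sub>R w) = b - 1" using ne by (simp add: l_def)
    ultimately show False by simp
  qed
  have sneg: "\<sigma> \<le> 0"
  proof (rule ccontr)
    assume "\<not> \<sigma> \<le> 0"
    hence sp: "\<sigma> > 0" by simp
    define t where "t = (\<bar>b\<bar> + 1) / \<sigma>"
    have "t > 0" using sp by (simp add: t_def)
    hence "p \<bullet> 0 + \<sigma> * t \<le> b" using A'[of 0 t] p0 by simp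
    moreover have "\<sigma> * t = \<bar>b\<bar> + 1" using sp by (simp add: t_def)
    ultimately show False by simp
  qed
  have sn0: "\<sigma> \<noteq> 0"
  proof
    assume s0: "\<sigma> = 0"
    have "p \<bullet> p \<le> b" using A'[of p "phi p + 1"] s0 by simp
    hence "p = 0" using b0 by (metis inner_ge_zero inner_eq_zero_iff order_antisym order_trans)
    thus False using a0 a s0 by (simp add: zero_prod_def)
  qed
  hence sl: "\<sigma> < 0" using sneg by simp
  define q where "q = (- 1 / \<sigma>) *\<^sub>R p"
  have "q \<bullet> w \<le> phi w" for w
  proof (rule ccontr)
    assume "\<not> q \<bullet> w \<le> phi w"
    hence lt: "phi w < q \<bullet> w" by simp
    define t where "t = (phi w + q \<bullet> w) / 2"
    have "t > phi w" using lt by (simp add: t_def)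
    hence "p \<bullet> w + \<sigma> * t \<le> b" by (rule A')
    moreover have "q \<bullet> w = - (p \<bullet> w) / \<sigma>" by (simp add: q_def)
    hence "p \<bullet> w = - \<sigma> * (q \<bullet> w)" using sl by (simp add: field_simps)
    ultimately have "- \<sigma> * (q \<bullet> w) + \<sigma> * t \<le> 0" using b0 by simp
    hence "\<sigma> * (t - q \<bullet> w) \<le> 0" by (simp add: algebra_simps)
    hence "t - q \<bullet> w \<ge> 0" using sl by (simp add: mult_le_0_iff)
    moreover have "t < q \<bullet> w" using lt by (simp add: t_def)
    ultimately show False by simp
  qed
  moreover have "J *v w = 0 \<longrightarrow> q \<bullet> w = 0" for w using pN by (simp add: q_def)
  ultimately show ?thesis by blast
qed

theorem theorem3p2:
  fixes f :: "real^'n \<Rightarrow> real" and g :: "real^'n \<Rightarrow> real^'n"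
    and c :: "real^'n \<Rightarrow> real^'m" and J :: "real^'n \<Rightarrow> real^'n^'m"
    and r :: "real^'n \<Rightarrow> real"
    and kappa_v alpha_k :: real and x_k v_k u_k :: "real^'n"
  assumes m_le_n: "CARD('m) \<le> CARD('n)"
    and f_diff: "\<And>x. (f has_derivative (\<lambda>h. g x \<bullet> h)) (at x)" and g_cont: "continuous_on UNIV g"
    and c_diff: "\<And>x. (c has_derivative (\<lambda>h. J x *v h)) (at x)" and J_cont: "continuous_on UNIV J"
    and r_convex: "convex_on UNIV r" and r_nonneg: "\<And>x. r x \<ge> 0"
    and kappa_pos: "kappa_v > 0" and alpha_pos: "alpha_k > 0"
    and step1: "normal_step_ok kappa_v alpha_k (c x_k) (J x_k) v_k"
  shows "(transpose (J x_k) *v c x_k = 0 \<and> c x_k \<noteq> 0 \<longrightarrow>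
            c x_k \<noteq> 0 \<and> transpose (J x_k) *v c x_k = 0)
       \<and> ((transpose (J x_k) *v c x_k \<noteq> 0 \<or> c x_k = 0) \<and>
          tangential_step_ok r alpha_k x_k (g x_k) (J x_k) v_k u_k \<and>
          v_k + u_k = 0 \<longrightarrow>
            c x_k = 0 \<and>
            (\<exists>y::real^'m. \<exists>g_r \<in> subdiff r x_k. g x_k + g_r - transpose (J x_k) *v y = 0))"
  proof (intro conjI impI)
  assume "transpose (J x_k) *v c x_k = 0 \<and> c x_k \<noteq> 0"
  thus "c x_k \<noteq> 0" "transpose (J x_k) *v c x_k = 0" by auto
next
  assume H: "(transpose (J x_k) *v c x_k \<noteq> 0 \<or> c x_k = 0) \<and>
          tangential_step_ok r alpha_k x_k (g x_k) (J x_k) v_k u_k \<and> v_k + u_k = 0"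
  define Jk where "Jk = J x_k"
  define ck where "ck = c x_k"
  define e where "e = transpose Jk *v ck"
  have Ju: "Jk *v u_k = 0" using H by (simp add: tangential_step_ok_def Jk_def)
  have uv: "u_k = - v_k" using H by (metis add_eq_0_iff)
  have Jv: "Jk *v v_k = 0" using Ju uv by (metis matrix_vector_mult_0_right add.right_neutral diff_add_cancel matrix_vector_mult_diff_distrib minus_add_cancel)
  have e0: "e = 0"
  proof (rule ccontr)
    assume en: "e \<noteq> 0"
    then obtain w0 beta_c where w0: "v_k = transpose Jk *v w0"
      and bc: "0 \<le> beta_c" "beta_c \<le> kappa_v * alpha_k"
      and bmin: "\<And>beta. 0 \<le> beta \<and> beta \<le> kappa_v * alpha_k \<longrightarrow>
              (1/2) * (norm (ck - beta *\<^sub>R (Jk *v e)))\<^sup>2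
              \<ge> (1/2) * (norm (ck - beta_c *\<^sub>R (Jk *v e)))\<^sup>2"
      and bn: "norm (ck + Jk *v v_k) \<le> norm (ck + Jk *v (- (beta_c *\<^sub>R e)))"
      using step1 unfolding normal_step_ok_def e_def Jk_def ck_def by auto
    have "v_k \<bullet> v_k = w0 \<bullet> (Jk *v v_k)" using w0 tdot by metis
    hence v0: "v_k = 0" using Jv by simp
    define d where "d = Jk *v e"
    have nd: "Jk *v (- (beta_c *\<^sub>R e)) = - (beta_c *\<^sub>R d)"
      using matrix_vector_mult_scaleR[of Jk "- beta_c" e] by (simp add: d_def)
    have "norm ck \<le> norm (ck - beta_c *\<^sub>R d)" using bn v0 nd by simp
    hence c1: "(norm ck)\<^sup>2 \<le> (norm (ck - beta_c *\<^sub>R d))\<^sup>2" by (simp add: power_mono)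
    define E where "E = e \<bullet> e"
    define D where "D = d \<bullet> d"
    have Ep: "E > 0" using en by (simp add: E_def)
    have D0: "D \<ge> 0" by (simp add: D_def)
    have cd: "ck \<bullet> d = E" unfolding E_def d_def e_def by (metis tdot inner_commute)
    define beta where "beta = min (kappa_v * alpha_k) (E / (D + 1))"
    have bp: "beta > 0" using kappa_pos alpha_pos Ep D0 by (simp add: beta_def)
    have bl: "beta \<le> kappa_v * alpha_k" by (simp add: beta_def)
    have "(norm ck)\<^sup>2 \<le> (norm (ck - beta *\<^sub>R d))\<^sup>2" using c1 bmin[of beta] bp bl d_def by simp
    also have "\<dots> = (norm ck)\<^sup>2 - 2 * beta * E + beta\<^sup>2 * D"
    proof -
      have "(norm (ck - beta *\<^sub>R d))\<^sup>2 = (ck - beta *\<^sub>R d) \<bullet> (ck - beta *\<^sub>R d)"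
        by (rule power2_norm_eq_inner)
      also have "\<dots> = ck \<bullet> ck - 2 * beta * (ck \<bullet> d) + beta * beta * (d \<bullet> d)"
        by (simp add: inner_diff_left inner_diff_right inner_commute algebra_simps)
      also have "ck \<bullet> ck = (norm ck)\<^sup>2" by (simp add: power2_norm_eq_inner)
      finally show ?thesis using cd by (simp add: D_def power2_eq_square)
    qed
    finally have "2 * beta * E \<le> beta * (beta * D)" by (simp add: power2_eq_square algebra_simps)
    hence i1: "2 * E \<le> beta * D" using bp by simp
    have "beta \<le> E / (D + 1)" by (simp add: beta_def)
    hence "beta * D \<le> E / (D + 1) * D" using D0 by (rule mult_right_mono)
    also have "\<dots> < E" using Ep D0 by (simp add: field_simps)
    finally show False using i1 Ep by simp
  qed
  hence c0: "c x_k = 0" using H by (simp add: e_def Jk_def ck_def)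
  hence v0: "v_k = 0" using step1 by (simp add: normal_step_ok_def)
  hence u0: "u_k = 0" using uv by simp
  have tmin: "\<And>w. Jk *v w = 0 \<Longrightarrow> r x_k \<le> g x_k \<bullet> w + (norm w)\<^sup>2 / (2 * alpha_k) + r (x_k + w)"
    using H v0 u0 by (simp add: tangential_step_ok_def Jk_def)
  define phi where "phi w = g x_k \<bullet> w + r (x_k + w) - r x_k" for w
  have cphi: "convex_on UNIV phi"
  proof (rule convex_onI[OF _ convex_UNIV])
    fix t :: real and a b :: "real^'n"
    assume t0: "0 < t" and t1: "t < 1"
    hence t: "0 < t \<and> t < 1" by simp
    have eq: "x_k + ((1 - t) *\<^sub>R a + t *\<^sub>R b) = (1 - t) *\<^sub>R (x_k + a) + t *\<^sub>R (x_k + b)"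
      by (simp add: algebra_simps)
    have "r (x_k + ((1 - t) *\<^sub>R a + t *\<^sub>R b)) \<le> (1 - t) * r (x_k + a) + t * r (x_k + b)"
      unfolding eq using convex_onD[OF r_convex, of t] t by simp
    thus "phi ((1 - t) *\<^sub>R a + t *\<^sub>R b) \<le> (1 - t) * phi a + t * phi b"
      unfolding phi_def by (simp add: inner_add_right algebra_simps)
  qed
  have p0: "phi 0 = 0" by (simp add: phi_def)
  have nn: "phi w \<ge> 0" if Jw: "Jk *v w = 0" for w
  proof (rule ccontr)
    assume "\<not> phi w \<ge> 0"
    hence L: "phi w < 0" by simp
    define K where "K = (norm w)\<^sup>2 / (2 * alpha_k)"
    have K0: "K \<ge> 0" using alpha_pos by (simp add: K_def)
    define t where "t = min 1 (- phi w / (2 * (K + 1)))"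
    have tp: "t > 0" using L K0 by (simp add: t_def divide_neg_pos)
    have t1: "t \<le> 1" by (simp add: t_def)
    have "Jk *v (t *\<^sub>R w) = 0" using Jw by (simp add: matrix_vector_mult_scaleR)
    hence m: "r x_k \<le> g x_k \<bullet> (t *\<^sub>R w) + (norm (t *\<^sub>R w))\<^sup>2 / (2 * alpha_k) + r (x_k + t *\<^sub>R w)"
      by (rule tmin)
    have n2: "(norm (t *\<^sub>R w))\<^sup>2 / (2 * alpha_k) = t * (t * K)"
      using tp by (simp add: K_def power2_eq_square)
    have eq: "x_k + t *\<^sub>R w = (1 - t) *\<^sub>R x_k + t *\<^sub>R (x_k + w)" by (simp add: algebra_simps)
    have rc: "r (x_k + t *\<^sub>R w) \<le> (1 - t) * r x_k + t * r (x_k + w)"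
      unfolding eq using convex_onD[OF r_convex, of t] tp t1 by simp
    have "0 \<le> t * (phi w + t * K)"
      using m n2 rc by (simp add: phi_def algebra_simps)
    hence i: "0 \<le> phi w + t * K" using tp by (simp add: zero_le_mult_iff)
    have "t \<le> - phi w / (2 * (K + 1))" by (simp add: t_def)
    hence "t * K \<le> (- phi w / (2 * (K + 1))) * K" using K0 by (rule mult_right_mono)
    also have "\<dots> \<le> - phi w / 2" using L K0 by (simp add: field_simps)
    finally show False using i L by simp
  qed
  obtain q where qN: "\<forall>w. Jk *v w = 0 \<longrightarrow> q \<bullet> w = 0" and qs: "\<forall>w. phi w \<ge> q \<bullet> w"
    using sep_kkt[OF cphi p0, of Jk] nn by blast
  obtain y where y: "q = transpose Jk *v y" using range_T[of Jk q] qN by blast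
  have "q - g x_k \<in> subdiff r x_k"
    unfolding subdiff_def
  proof (clarify)
    fix z
    have "q \<bullet> (z - x_k) \<le> phi (z - x_k)" using qs by blast
    thus "r x_k + (q - g x_k) \<bullet> (z - x_k) \<le> r z" by (simp add: phi_def inner_diff_left)
  qed
  moreover have "g x_k + (q - g x_k) - transpose (J x_k) *v y = 0" using y by (simp add: Jk_def)
  ultimately show "\<exists>y::real^'m. \<exists>g_r \<in> subdiff r x_k. g x_k + g_r - transpose (J x_k) *v y = 0"
    by blast
  show "c x_k = 0" by (rule c0)
qed

end
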